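(* There exist a complex number $\gamma\in\mathbb C$ with $\operatorname{Im}(\gamma)<0$ and a complex-valued solution $W:\mathbb R\to\mathbb C$ of the ordinary differential equation \[ \gamma\,(\gamma-z^2)^2\,\frac{d}{dz}W(z)+\frac{d^3}{dz^3}\Big[(\gamma-z^2)W(z)\Big]=0,\qquad z\in\mathbb R, \] such that $\lim_{z\to-\infty}W(z)=0$ and $\lim_{z\to+\infty}W(z)=1$. *)

theory Defs
  imports "HOL-Analysis.Analysis"
begin

end

theory Submission imports Defs "HOL-Complex_Analysis.Complex_Analysis" "HOL-Real_Asymp.Real_Asymp"
begin

definition al :: complex where "al = Complex (-1/2) (sqrt 3/2)"
definition gm :: complex where "gm = Complex (-1/2) (-(sqrt 3/2))"
definition om :: complex where "om = Complex (sqrt 3/2) (1/2)"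

lemma s3: "sqrt 3 * sqrt 3 = (3::real)" by simp

lemma al_al: "al * al = gm"
  by (simp add: al_def gm_def complex_eq_iff field_simps)
lemma al_gm: "al * gm = 1"
  by (simp add: al_def gm_def complex_eq_iff field_simps)
lemma al_om: "al * om^2 = -1"
  by (simp add: al_def om_def complex_eq_iff field_simps power2_eq_square)
lemma Im_gm: "Im gm < 0" by (simp add: gm_def)
lemma om_nz: "om \<noteq> 0" by (simp add: om_def complex_eq_iff)
lemma al_nz: "al \<noteq> 0" by (simp add: al_def complex_eq_iff)

definition fe :: "complex \<Rightarrow> complex" where "fe w = exp (al * w^2 / 2)"

lemma fe_hol: "fe holomorphic_on UNIV"
  unfolding fe_def by (auto intro!: holomorphic_intros)

lemma prim_ex: "\<exists>g. \<forall>x. (g has_field_derivative fe x) (at x)"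
proof -
  obtain g where "\<And>x. x \<in> UNIV \<Longrightarrow> (g has_field_derivative fe x) (at x within UNIV)"
    using holomorphic_convex_primitive'[OF convex_UNIV open_UNIV fe_hol] by blast
  then show ?thesis by auto
qed

definition Hp :: "complex \<Rightarrow> complex" where "Hp = (SOME g. \<forall>x. (g has_field_derivative fe x) (at x))"
definition Hn :: "complex \<Rightarrow> complex" where "Hn w = Hp w - Hp 0"

lemma Hn_deriv: "(Hn has_field_derivative fe x) (at x)"
proof -
  have "(Hp has_field_derivative fe x) (at x)" using someI_ex[OF prim_ex] unfolding Hp_def by blast
  then have "((\<lambda>w. Hp w - Hp 0) has_field_derivative fe x - 0) (at x)"
    by (intro derivative_intros)
  then show ?thesis by (simp add: Hn_def[abs_def])
qed

lemma Hn_deriv_w[derivative_intros]: "(Hn has_field_derivative fe x) (at x within S)"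
  using Hn_deriv has_field_derivative_at_within by blast

lemma Hn0: "Hn 0 = 0" by (simp add: Hn_def)

lemma Hn_odd: "Hn (-w) = - Hn w"
proof -
  have "\<exists>c. \<forall>x\<in>UNIV. Hn (-x) + Hn x = c"
  proof (rule has_field_derivative_zero_constant)
    fix x :: complex
    have "((\<lambda>x. Hn (-x) + Hn x) has_field_derivative (fe (-x) * (-1) + fe x)) (at x within UNIV)"
      by (rule derivative_eq_intros DERIV_chain2[OF Hn_deriv] | simp)+
    moreover have "fe (-x) * (-1) + fe x = 0" by (simp add: fe_def)
    ultimately show "((\<lambda>x. Hn (-x) + Hn x) has_field_derivative 0) (at x within UNIV)" by simp
  qed auto
  then obtain c where "\<And>x. Hn (-x) + Hn x = c" by auto
  from this[of 0] this[of w] have "Hn (-w) + Hn w = 0" by (simp add: Hn0)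
  then show ?thesis by (simp add: eq_neg_iff_add_eq_0)
qed

lemma fe_om: "fe (om * of_real t) = of_real (exp (-(t^2)/2))"
proof -
  have "al * (om * of_real t)^2 / 2 = (al * om^2) * of_real t ^2 / 2" by (simp add: power_mult_distrib mult.assoc)
  also have "\<dots> = of_real (-(t^2)/2)" by (simp add: al_om)
  finally have e: "al * (om * of_real t)^2 / 2 = of_real (-(t^2)/2)" .
  show ?thesis unfolding fe_def e by (rule exp_of_real)
qed

definition G :: "real \<Rightarrow> complex" where "G t = Hn (om * of_real t) / om"

lemma G_vd: "(G has_vector_derivative of_real (exp (-(t^2)/2))) (at t)"
proof -
  have "((\<lambda>w. Hn (om * w) / om) has_field_derivative fe (om * of_real t) * om / om) (at (of_real t))"
    by (rule derivative_eq_intros DERIV_chain2[OF Hn_deriv] | simp add: om_nz)+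
  then have "((\<lambda>w. Hn (om * w) / om) has_field_derivative of_real (exp (-(t^2)/2))) (at (of_real t))"
    using om_nz by (simp add: fe_om)
  from has_vector_derivative_real_field[OF this] show ?thesis by (simp add: G_def[abs_def])
qed

lemma G_Im: "Im (G t) = 0"
proof -
  have "\<exists>c. \<forall>x\<in>UNIV. Im (G x) = c"
  proof (rule has_field_derivative_zero_constant)
    fix x :: real
    have "((\<lambda>t. Im (G t)) has_vector_derivative Im (of_real (exp (-(x^2)/2)))) (at x)"
      by (rule bounded_linear.has_vector_derivative[OF bounded_linear_Im G_vd])
    then show "((\<lambda>t. Im (G t)) has_field_derivative 0) (at x within UNIV)"
      by (simp add: has_real_derivative_iff_has_vector_derivative)
  qed auto
  then obtain c where "\<And>x. Im (G x) = c" by auto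
  from this[of 0] this[of t] show ?thesis by (simp add: G_def Hn0)
qed

definition q :: "real \<Rightarrow> real" where "q t = Re (G t)"

lemma G_q: "G t = of_real (q t)"
  using G_Im[of t] by (simp add: q_def complex_eq_iff)

lemma q_deriv: "(q has_real_derivative exp (-(t^2)/2)) (at t)"
proof -
  have "(q has_vector_derivative Re (of_real (exp (-(t^2)/2)))) (at t)"
    unfolding q_def[abs_def] by (rule bounded_linear.has_vector_derivative[OF bounded_linear_Re G_vd])
  then show ?thesis by (simp add: has_real_derivative_iff_has_vector_derivative)
qed

lemma q0: "q 0 = 0" by (simp add: q_def G_def Hn0)

lemma q_mono: "a \<le> b \<Longrightarrow> q a \<le> q b"
  by (rule DERIV_nonneg_imp_nondecreasing[where f=q]) (auto intro: q_deriv)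

lemma q_pos: "q 1 > 0"
proof -
  have "q 0 < q 1"
    by (rule DERIV_pos_imp_increasing[where f=q]) (auto intro: q_deriv)
  then show ?thesis by (simp add: q0)
qed

lemma q_bound: "t \<ge> 0 \<Longrightarrow> q t \<le> exp (1/2)"
proof -
  assume t: "t \<ge> 0"
  have "q t + exp (1/2 - t) \<le> q 0 + exp (1/2 - 0)"
  proof (rule DERIV_nonpos_imp_nonincreasing[where f="\<lambda>t. q t + exp (1/2 - t)"])
    fix x assume "0 \<le> x" "x \<le> t"
    have "((\<lambda>t. q t + exp (1/2 - t)) has_real_derivative exp (-(x^2)/2) + exp (1/2 - x) * (0 - 1)) (at x)"
      by (rule derivative_eq_intros q_deriv refl)+
    moreover have "exp (-(x^2)/2) \<le> exp (1/2 - x)"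
      using sum_power2_ge_zero[of "x - 1" 0] by (simp add: power2_eq_square algebra_simps)
    ultimately show "\<exists>y. ((\<lambda>t. q t + exp (1/2 - t)) has_real_derivative y) (at x) \<and> y \<le> 0"
      by force
  qed (use t in auto)
  then show ?thesis using q0 by (smt (verit) exp_gt_zero)
qed

definition L :: real where "L = Sup (q ` {0..})"

lemma q_lim: "(q \<longlongrightarrow> L) at_top"
proof -
  have bdd: "bdd_above (q ` {0..})" using q_bound by (auto intro!: bdd_aboveI2)
  show ?thesis
  proof (rule increasing_tendsto)
    show "\<forall>\<^sub>F n in at_top. q n \<le> L"
      using eventually_ge_at_top[of 0] by eventually_elim (auto simp: L_def intro!: cSUP_upper bdd)
  next
    fix x assume "x < L"
    then obtain s where s: "s \<ge> 0" "x < q s" using less_cSUP_iff[OF _ bdd, of x] unfolding L_def by auto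
    show "\<forall>\<^sub>F n in at_top. x < q n"
      using eventually_ge_at_top[of s] by eventually_elim (use s q_mono in force)
  qed
qed

lemma L_pos: "L > 0"
proof -
  have bdd: "bdd_above (q ` {0..})" using q_bound by (auto intro!: bdd_aboveI2)
  have "q 1 \<le> L" unfolding L_def by (rule cSUP_upper[OF _ bdd]) auto
  then show ?thesis using q_pos by simp
qed

lemma fe_deriv[derivative_intros]: "(fe has_field_derivative al * w * fe w) (at w within S)"
  unfolding fe_def[abs_def]
  by (rule derivative_eq_intros refl | simp)+

definition Wc :: "complex \<Rightarrow> complex \<Rightarrow> complex" where
  "Wc B w = 1/2 + B * (w * fe w / (gm - w^2)) + B * al * Hn w"
definition W1c :: "complex \<Rightarrow> complex \<Rightarrow> complex" where
  "W1c B w = 2*gm*B * fe w / (gm - w^2)^2"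
definition V1c :: "complex \<Rightarrow> complex \<Rightarrow> complex" where
  "V1c B w = -2*w*Wc B w + 2*gm*B * fe w / (gm - w^2)"
definition V2c :: "complex \<Rightarrow> complex \<Rightarrow> complex" where
  "V2c B w = -2*Wc B w + 2*gm*B * al * w * fe w / (gm - w^2)"
definition V3c :: "complex \<Rightarrow> complex \<Rightarrow> complex" where
  "V3c B w = -2*(2*gm*B) * fe w / (gm - w^2)^2 + 2*gm*B * al * (fe w / (gm - w^2) + al * w^2 * fe w / (gm - w^2) + 2 * w^2 * fe w / (gm-w^2)^2)"

lemma Wc_d: assumes "gm - w^2 \<noteq> 0" shows "(Wc B has_field_derivative W1c B w) (at w)"
proof -
  have ne: "gm \<noteq> w^2" "(gm - w^2)^2 \<noteq> 0" using assms by auto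
  have ip: "inverse (gm - w*w) * (gm - w*w) = 1" using assms by (simp add: power2_eq_square)
  show ?thesis
  unfolding Wc_def[abs_def]
  apply (rule derivative_eq_intros refl Hn_deriv_w fe_deriv | simp add: ne)+
  unfolding W1c_def using ip al_gm al_al
  apply (simp only: divide_inverse inverse_mult_distrib power2_eq_square)
  apply algebra
  done
qed

lemma V1c_d: assumes "gm - w^2 \<noteq> 0" shows "((\<lambda>w. (gm - w^2) * Wc B w) has_field_derivative V1c B w) (at w)"
proof -
  have ne: "gm \<noteq> w^2" "(gm - w^2)^2 \<noteq> 0" using assms by auto
  have ip: "inverse (gm - w*w) * (gm - w*w) = 1" using assms by (simp add: power2_eq_square)
  show ?thesis
  apply (rule derivative_eq_intros refl Wc_d[OF assms] | simp add: ne)+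
  unfolding W1c_def V1c_def using ip al_gm al_al
  apply (simp only: divide_inverse inverse_mult_distrib power2_eq_square)
  apply algebra
  done
qed

lemma V2c_d: assumes "gm - w^2 \<noteq> 0" shows "(V1c B has_field_derivative V2c B w) (at w)"
proof -
  have ne: "gm \<noteq> w^2" "(gm - w^2)^2 \<noteq> 0" using assms by auto
  have ip: "inverse (gm - w*w) * (gm - w*w) = 1" using assms by (simp add: power2_eq_square)
  show ?thesis
  unfolding V1c_def[abs_def]
  apply (rule derivative_eq_intros refl Wc_d[OF assms] fe_deriv | simp add: ne)+
  unfolding W1c_def V2c_def using ip al_gm al_al
  apply (simp only: divide_inverse inverse_mult_distrib power2_eq_square)
  apply algebra
  done
qed

lemma V3c_d: assumes "gm - w^2 \<noteq> 0" shows "(V2c B has_field_derivative V3c B w) (at w)"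
proof -
  have ne: "gm \<noteq> w^2" "(gm - w^2)^2 \<noteq> 0" using assms by auto
  have ip: "inverse (gm - w*w) * (gm - w*w) = 1" using assms by (simp add: power2_eq_square)
  show ?thesis
  unfolding V2c_def[abs_def]
  apply (rule derivative_eq_intros refl Wc_d[OF assms] fe_deriv | simp add: ne)+
  unfolding W1c_def V3c_def using ip al_gm al_al
  apply (simp only: divide_inverse inverse_mult_distrib power2_eq_square)
  apply algebra
  done
qed

lemma ode: assumes "gm - w^2 \<noteq> 0" shows "gm * (gm - w^2)^2 * W1c B w + V3c B w = 0"
proof -
  have ne: "gm \<noteq> w^2" "(gm - w^2)^2 \<noteq> 0" using assms by auto
  have ip: "inverse (gm - w*w) * (gm - w*w) = 1" using assms by (simp add: power2_eq_square)
  show ?thesis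
  unfolding W1c_def V3c_def
  using ip al_gm al_al
  apply (simp only: divide_inverse inverse_mult_distrib power2_eq_square)
  apply algebra
  done
qed

lemma s3le: "sqrt 3 / 2 \<le> (1::real)"
proof -
  have "sqrt 3 \<le> sqrt 4" by (rule real_sqrt_le_mono) simp
  moreover have "sqrt 4 = (2::real)" by (rule real_sqrt_unique) auto
  ultimately show ?thesis by linarith
qed

lemma seg_core:
  fixes x :: complex and u R :: real
  assumes R: "R > 0" and u: "0 \<le> u" "u \<le> 1" and xu: "x = (1 - u) *\<^sub>R (om * of_real R) + u *\<^sub>R of_real R"
  shows "Re (al * x^2 / 2) \<le> -(R^2)/8"
proof -
  define a where "a = Re x"
  define b where "b = Im x"
  have a_eq: "a = R * ((1 - u) * (sqrt 3 / 2) + u)" unfolding a_def xu by (simp add: om_def field_simps)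
  have b_eq: "b = R * ((1 - u) / 2)" unfolding b_def xu by (simp add: om_def field_simps)
  have "u * (1 - sqrt 3 / 2) \<ge> 0" using u s3le by simp
  moreover have "(1 - u) * (sqrt 3 / 2) + u = sqrt 3 / 2 + u * (1 - sqrt 3 / 2)" by (simp add: field_simps)
  ultimately have "(1 - u) * (sqrt 3 / 2) + u \<ge> sqrt 3 / 2" by linarith
  then have a_ge: "a \<ge> R * (sqrt 3 / 2)" using R a_eq by (simp add: mult_left_mono)
  have "R * ((1 - u) / 2) \<ge> 0" using u R by (intro mult_nonneg_nonneg) auto
  then have b_ge: "b \<ge> 0" using b_eq by simp
  have "R * ((1 - u) / 2) \<le> R * (1/2)" using u R by (intro mult_left_mono) auto
  then have b_le: "b \<le> R / 2" using b_eq by simp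
  have R0: "R * (sqrt 3 / 2) \<ge> 0" using R by simp
  then have "(R * (sqrt 3 / 2))^2 \<le> a^2" using a_ge by (intro power_mono) auto
  then have a2: "a^2 \<ge> 3/4 * R^2" by (simp add: power_mult_distrib power_divide)
  have "b^2 \<le> (R/2)^2" using power_mono[OF b_le b_ge, of 2] .
  then have b2: "b^2 \<le> R^2/4" by (simp add: power_divide)
  have "a * b \<ge> 0" using a_ge b_ge R0 by simp
  then have ab: "sqrt 3 * (a * b) \<ge> 0" by simp
  have "x = Complex a b" unfolding a_def b_def by simp
  then have re: "Re (al * x^2 / 2) = (-(a^2 - b^2)/2 - sqrt 3 * (a * b)) / 2"
    by (simp add: al_def power2_eq_square field_simps)
  have key: "\<And>A B S RR::real. 3/4*RR \<le> A \<Longrightarrow> B \<le> RR/4 \<Longrightarrow> 0 \<le> S \<Longrightarrow> (-(A - B)/2 - S)/2 \<le> -RR/8" by (simp add: field_simps)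
  show ?thesis unfolding re using key[OF a2 b2 ab] by simp
qed

lemma seg_re:
  assumes R: "R > 0" and x: "x \<in> closed_segment (om * of_real R) (of_real R)"
  shows "norm (fe x) \<le> exp (-(R^2)/8)"
proof -
  obtain u where u: "0 \<le> u" "u \<le> 1" and xu: "x = (1 - u) *\<^sub>R (om * of_real R) + u *\<^sub>R of_real R"
    using x unfolding in_segment by auto
  have "Re (al * x^2 / 2) \<le> -(R^2)/8" by (rule seg_core[OF R u xu])
  then show ?thesis by (simp add: fe_def norm_exp_eq_Re)
qed

lemma edge:
  assumes R: "R > 0"
  shows "norm (Hn (of_real R) - Hn (om * of_real R)) \<le> exp (-(R^2)/8) * (norm (1 - om) * R)"
proof -
  have "(fe has_contour_integral (Hn (pathfinish (linepath (om * of_real R) (of_real R))) - Hn (pathstart (linepath (om * of_real R) (of_real R))))) (linepath (om * of_real R) (of_real R))"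
    by (rule contour_integral_primitive[where S=UNIV]) (auto intro: Hn_deriv_w)
  then have ci: "(fe has_contour_integral (Hn (of_real R) - Hn (om * of_real R))) (linepath (om * of_real R) (of_real R))"
    by simp
  have "norm (Hn (of_real R) - Hn (om * of_real R)) \<le> exp (-(R^2)/8) * norm (of_real R - om * of_real R)"
    by (rule has_contour_integral_bound_linepath[OF ci]) (use seg_re R in auto)
  also have "norm (of_real R - om * of_real R) = norm (1 - om) * R"
  proof -
    have "of_real R - om * of_real R = (1 - om) * of_real R" by (simp add: algebra_simps)
    then show ?thesis using R by (simp add: norm_mult)
  qed
  finally show ?thesis .
qed

lemma Hn_top: "((\<lambda>t. Hn (of_real t)) \<longlongrightarrow> om * of_real L) at_top"
proof -
  have E: "((\<lambda>t. Hn (of_real t) - Hn (om * of_real t)) \<longlongrightarrow> 0) at_top"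
  proof (rule Lim_null_comparison)
    show "\<forall>\<^sub>F t in at_top. norm (Hn (of_real t) - Hn (om * of_real t)) \<le> norm (1 - om) * (t * exp (-(t^2)/8))"
      using eventually_gt_at_top[of 0] by eventually_elim (use edge in \<open>simp add: algebra_simps\<close>)
    have "((\<lambda>t::real. t * exp (-(t^2)/8)) \<longlongrightarrow> 0) at_top" by real_asymp
    then show "((\<lambda>t. norm (1 - om) * (t * exp (-(t^2)/8))) \<longlongrightarrow> 0) at_top"
      by (rule tendsto_mult_right_zero)
  qed
  have Q: "((\<lambda>t. om * of_real (q t)) \<longlongrightarrow> om * of_real L) at_top"
    by (intro tendsto_intros q_lim)
  have "((\<lambda>t. om * of_real (q t) + (Hn (of_real t) - Hn (om * of_real t))) \<longlongrightarrow> om * of_real L + 0) at_top"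
    by (rule tendsto_add[OF Q E])
  moreover have "om * of_real (q t) = Hn (om * of_real t)" for t
    using G_q[of t] om_nz by (simp add: G_def field_simps)
  ultimately show ?thesis by simp
qed

lemma norm_fe_real: "norm (fe (of_real t)) = exp (-(t^2)/4)"
  by (simp add: fe_def norm_exp_eq_Re al_def power2_eq_square)

lemma p_ne: "gm - (of_real t)^2 \<noteq> 0"
proof
  assume "gm - (of_real t)^2 = 0"
  then have "Im (gm - (of_real t)^2) = 0" by simp
  then show False by (simp add: gm_def power2_eq_square)
qed

lemma p_norm: "norm (gm - (of_real t)^2) \<ge> sqrt 3 / 2"
proof -
  have "\<bar>Im (gm - (of_real t)^2)\<bar> \<le> norm (gm - (of_real t)^2)" by (rule abs_Im_le_cmod)
  moreover have "Im (gm - (of_real t)^2) = -(sqrt 3/2)" by (simp add: gm_def power2_eq_square)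
  ultimately show ?thesis by simp
qed

lemma term_lim: "((\<lambda>t::real. of_real t * fe (of_real t) / (gm - (of_real t)^2)) \<longlongrightarrow> 0) at_top"
proof (rule Lim_null_comparison)
  show "\<forall>\<^sub>F t in at_top. norm (of_real t * fe (of_real t) / (gm - (of_real t)^2)) \<le> 2 / sqrt 3 * (t * exp (-(t^2)/4))"
    using eventually_gt_at_top[of 0]
  proof eventually_elim
    case (elim t)
    have pn: "norm (gm - (of_real t)^2) \<ge> sqrt 3 / 2" by (rule p_norm)
    have pos: "sqrt 3 / 2 > 0" by simp
    have pn1: "norm (gm - (of_real t)^2) > 0" using pn pos by linarith
    have pn0: "norm (gm - (of_real t)^2) * sqrt 3 > 0" using pn1 by simp
    have "norm (of_real t * fe (of_real t) / (gm - (of_real t)^2)) = t * exp (-(t^2)/4) / norm (gm - (of_real t)^2)"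
      using elim by (simp add: norm_mult norm_divide norm_fe_real)
    also have "\<dots> \<le> t * exp (-(t^2)/4) / (sqrt 3 / 2)"
      by (rule divide_left_mono[OF pn]) (use elim pos pn0 in auto)
    finally show ?case by (simp add: field_simps)
  qed
  have "((\<lambda>t::real. t * exp (-(t^2)/4)) \<longlongrightarrow> 0) at_top" by real_asymp
  then show "((\<lambda>t. 2 / sqrt 3 * (t * exp (-(t^2)/4))) \<longlongrightarrow> 0) at_top"
    by (rule tendsto_mult_right_zero)
qed

lemma fe_even: "fe (-w) = fe w" by (simp add: fe_def)

theorem lemma1p2:
  shows "\<exists>(\<gamma>::complex) (W::real \<Rightarrow> complex).
    Im \<gamma> < 0 \<and>
    (\<exists>W1 V1 V2 V3.
       \<forall>z::real.
         (W has_vector_derivative W1 z) (at z) \<and>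
         ((\<lambda>t. (\<gamma> - (complex_of_real t)\<^sup>2) * W t) has_vector_derivative V1 z) (at z) \<and>
         (V1 has_vector_derivative V2 z) (at z) \<and>
         (V2 has_vector_derivative V3 z) (at z) \<and>
         \<gamma> * (\<gamma> - (complex_of_real z)\<^sup>2)\<^sup>2 * W1 z + V3 z = 0) \<and>
    (W \<longlongrightarrow> 0) at_bot \<and>
    (W \<longlongrightarrow> 1) at_top"
proof -
  define B where "B = 1 / (2 * al * om * of_real L)"
  have BL: "B * al * (om * of_real L) = 1/2"
    using al_nz om_nz L_pos by (simp add: B_def field_simps)
  define W where "W = (\<lambda>t::real. Wc B (of_real t))"
  have ders: "\<forall>z::real.
         (W has_vector_derivative (\<lambda>z. W1c B (of_real z)) z) (at z) \<and>
         ((\<lambda>t. (gm - (complex_of_real t)\<^sup>2) * W t) has_vector_derivative (\<lambda>z. V1c B (of_real z)) z) (at z) \<and>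
         ((\<lambda>z. V1c B (of_real z)) has_vector_derivative (\<lambda>z. V2c B (of_real z)) z) (at z) \<and>
         ((\<lambda>z. V2c B (of_real z)) has_vector_derivative (\<lambda>z. V3c B (of_real z)) z) (at z) \<and>
         gm * (gm - (complex_of_real z)\<^sup>2)\<^sup>2 * (\<lambda>z. W1c B (of_real z)) z + (\<lambda>z. V3c B (of_real z)) z = 0"
  proof
    fix z :: real
    note pz = p_ne[of z]
    show "(W has_vector_derivative (\<lambda>z. W1c B (of_real z)) z) (at z) \<and>
         ((\<lambda>t. (gm - (complex_of_real t)\<^sup>2) * W t) has_vector_derivative (\<lambda>z. V1c B (of_real z)) z) (at z) \<and>
         ((\<lambda>z. V1c B (of_real z)) has_vector_derivative (\<lambda>z. V2c B (of_real z)) z) (at z) \<and>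
         ((\<lambda>z. V2c B (of_real z)) has_vector_derivative (\<lambda>z. V3c B (of_real z)) z) (at z) \<and>
         gm * (gm - (complex_of_real z)\<^sup>2)\<^sup>2 * (\<lambda>z. W1c B (of_real z)) z + (\<lambda>z. V3c B (of_real z)) z = 0"
      unfolding W_def
      using has_vector_derivative_real_field[OF Wc_d[OF pz]]
        has_vector_derivative_real_field[OF V1c_d[OF pz]]
        has_vector_derivative_real_field[OF V2c_d[OF pz]]
        has_vector_derivative_real_field[OF V3c_d[OF pz]]
        ode[OF pz]
      by auto
  qed
  have top: "(W \<longlongrightarrow> 1) at_top"
  proof -
    have "((\<lambda>t. 1/2 + B * (of_real t * fe (of_real t) / (gm - (of_real t)^2)) + B * al * Hn (of_real t))
        \<longlongrightarrow> 1/2 + B * 0 + B * al * (om * of_real L)) at_top"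
      by (intro tendsto_intros term_lim Hn_top)
    then show ?thesis unfolding W_def Wc_def using BL by simp
  qed
  have bot: "(W \<longlongrightarrow> 0) at_bot"
  proof -
    have "((\<lambda>t. 1/2 - B * (of_real t * fe (of_real t) / (gm - (of_real t)^2)) - B * al * Hn (of_real t))
        \<longlongrightarrow> 1/2 - B * 0 - B * al * (om * of_real L)) at_top"
      by (intro tendsto_intros term_lim Hn_top)
    moreover have "W (-t) = 1/2 - B * (of_real t * fe (of_real t) / (gm - (of_real t)^2)) - B * al * Hn (of_real t)" for t
    proof -
      have "Hn (of_real (-t)) = - Hn (of_real t)" using Hn_odd[of "of_real t"] by simp
      moreover have "fe (of_real (-t)) = fe (of_real t)" using fe_even[of "of_real t"] by simp
      ultimately show ?thesis unfolding W_def Wc_def by (simp add: algebra_simps)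
    qed
    ultimately have "((\<lambda>t. W (-t)) \<longlongrightarrow> 0) at_top"
      using BL by simp
    then show ?thesis by (simp add: filterlim_at_bot_mirror)
  qed
  show ?thesis
    apply (rule exI[of _ gm], rule exI[of _ W])
    apply (intro conjI)
       apply (rule Im_gm)
      apply (rule exI[of _ "\<lambda>z. W1c B (of_real z)"], rule exI[of _ "\<lambda>z. V1c B (of_real z)"],
        rule exI[of _ "\<lambda>z. V2c B (of_real z)"], rule exI[of _ "\<lambda>z. V3c B (of_real z)"])
      apply (rule ders)
     apply (rule bot)
    apply (rule top)
    done
qed

end
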